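(* Every finite graph is isomorphic to an induced subgraph of the generating graph of some finite group.
   Context: The generating graph of a finite group $G$ has vertex set $G$, with distinct $x,y$ adjacent iff $\langle x,y\rangle=G$. *)

theory Defs
  imports "HOL-Algebra.Algebra"
begin

definition gen_graph_adj :: "('g, 'b) monoid_scheme \<Rightarrow> 'g \<Rightarrow> 'g \<Rightarrow> bool" where
  "gen_graph_adj G x y \<longleftrightarrow>
     x \<in> carrier G \<and> y \<in> carrier G \<and> x \<noteq> y \<and> generate G {x, y} = carrier G"

end

theory Submission imports Defs "HOL-Computational_Algebra.Primes" begin

definition Zn :: "nat \<Rightarrow> nat monoid" where
  "Zn n = \<lparr>carrier = {0..<n}, monoid.mult = (\<lambda>x y. (x + y) mod n), one = 0\<rparr>"

lemma Zn_group: assumes "n > 0" shows "group (Zn n)"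
proof (rule groupI)
  fix x assume x: "x \<in> carrier (Zn n)"
  show "\<exists>y\<in>carrier (Zn n). y \<otimes>\<^bsub>Zn n\<^esub> x = \<one>\<^bsub>Zn n\<^esub>"
    by (rule bexI[of _ "(n - x) mod n"]) (use x assms in \<open>auto simp: Zn_def mod_add_left_eq\<close>)
qed (use assms in \<open>auto simp: Zn_def mod_add_left_eq mod_add_right_eq add.assoc\<close>)

lemma Zn_inv: assumes "n > 0" "x < n" shows "inv\<^bsub>Zn n\<^esub> x = (n - x) mod n"
  by (rule group.inv_equality[OF Zn_group[OF assms(1)]])
     (use assms in \<open>auto simp: Zn_def mod_add_left_eq\<close>)

lemma Zn_nongen:
  assumes "n > 1" "x < n" "y < n" "Factorial_Ring.prime (p::nat)" "p dvd n" "p dvd x" "p dvd y"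
  shows "generate (Zn n) {x, y} \<noteq> carrier (Zn n)"
proof -
  have "z \<in> generate (Zn n) {x, y} \<Longrightarrow> p dvd z" for z
  proof (induction rule: generate.induct)
    case one then show ?case by (simp add: Zn_def)
  next
    case (incl h) then show ?case using assms by auto
  next
    case (inv h) then have "h < n" "p dvd h" using assms by auto
    then show ?case using assms Zn_inv[of n h]
      by (simp add: dvd_mod_iff dvd_diff_nat)
  next
    case (eng a b) then show ?case using assms by (simp add: Zn_def dvd_mod_iff)
  qed
  moreover have "1 \<in> carrier (Zn n)" using assms by (simp add: Zn_def)
  moreover have "\<not> p dvd 1" using prime_gt_1_nat[OF assms(4)] by auto
  ultimately show ?thesis by blast
qed

lemma Zn_gen:
  assumes "n > 1" "x < n" "y < n" "x > 0" "gcd x y = 1"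
  shows "generate (Zn n) {x, y} = carrier (Zn n)"
proof -
  let ?H = "generate (Zn n) {x, y}"
  have grp: "group (Zn n)" using assms by (intro Zn_group) auto
  have sub: "?H \<subseteq> carrier (Zn n)"
  proof
    fix h assume "h \<in> ?H"
    moreover have "{x,y} \<subseteq> carrier (Zn n)" using assms by (simp add: Zn_def)
    ultimately show "h \<in> carrier (Zn n)" using group.generate_in_carrier[OF grp] by blast
  qed
  have add: "a \<in> ?H \<Longrightarrow> b \<in> ?H \<Longrightarrow> (a + b) mod n \<in> ?H" for a b
    using generate.eng[of a "Zn n" "{x,y}" b] by (simp add: Zn_def)
  have mul: "g \<in> ?H \<Longrightarrow> (k * g) mod n \<in> ?H" for g k
  proof (induction k)
    case 0 then show ?case using generate.one[of "Zn n" "{x,y}"] by (simp add: Zn_def)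
  next
    case (Suc k)
    then have "(g + (k * g) mod n) mod n \<in> ?H" using add by blast
    then show ?case by (simp add: mod_add_right_eq add.commute)
  qed
  obtain a b where ab: "x * a = y * b + 1" using bezout_nat[of x y] assms by auto
  have hx: "x \<in> ?H" and hy: "y \<in> ?H" by (auto intro: generate.incl)
  have "((x * a) mod n + ((n - 1) * (y * b)) mod n) mod n \<in> ?H"
  proof -
    have "(a * x) mod n \<in> ?H" by (rule mul[OF hx])
    moreover have "((n - 1) * b * y) mod n \<in> ?H" by (rule mul[OF hy])
    ultimately show ?thesis using add by (simp add: ac_simps)
  qed
  moreover have "((x * a) mod n + ((n - 1) * (y * b)) mod n) mod n = 1"
  proof -
    have "((x * a) mod n + ((n - 1) * (y * b)) mod n) mod n = (x * a + (n - 1) * (y * b)) mod n"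
      by (simp add: mod_add_eq)
    also have "x * a + (n - 1) * (y * b) = n * (y * b) + 1"
      using ab assms by (simp add: algebra_simps diff_mult_distrib)
    also have "(n * (y * b) + 1) mod n = 1 mod n" by (metis add.commute mod_mult_self2 mult.commute)
    also have "1 mod n = 1" using assms(1) by simp
    finally show ?thesis .
  qed
  ultimately have one: "1 \<in> ?H" by simp
  show ?thesis
  proof
    show "carrier (Zn n) \<subseteq> ?H"
    proof
      fix z assume "z \<in> carrier (Zn n)"
      then have "z < n" by (simp add: Zn_def)
      then show "z \<in> ?H" using mul[OF one, of z] by simp
    qed
  qed (rule sub)
qed

theorem theorem5p2:
  fixes V :: "'a set" and E :: "'a \<Rightarrow> 'a \<Rightarrow> bool"
  assumes "finite V"
    and "\<And>u v. E u v \<Longrightarrow> E v u"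
    and "\<And>v. \<not> E v v"
  shows "\<exists>(G :: nat monoid) f. group G \<and> finite (carrier G) \<and>
           f ` V \<subseteq> carrier G \<and> inj_on f V \<and>
           (\<forall>u\<in>V. \<forall>v\<in>V. E u v \<longleftrightarrow> gen_graph_adj G (f u) (f v))"
proof -
  define I where "I = {{}} \<union> (\<lambda>v. {v}) ` V \<union> {{u, v} | u v. u \<in> V \<and> v \<in> V \<and> u \<noteq> v \<and> \<not> E u v}"
  have fin2: "finite {{u, v} | u v. u \<in> V \<and> v \<in> V \<and> u \<noteq> v \<and> \<not> E u v}"
  proof -
    have "{{u, v} | u v. u \<in> V \<and> v \<in> V \<and> u \<noteq> v \<and> \<not> E u v} \<subseteq> (\<lambda>(u,v). {u,v}) ` (V \<times> V)"
      by fast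
    then show ?thesis by (rule finite_subset) (simp add: assms(1))
  qed
  have finI: "finite I" unfolding I_def using assms(1) fin2 by simp
  obtain B where B: "finite B" "card B = card I" "B \<subseteq> {p::nat. Factorial_Ring.prime p}"
    using infinite_arbitrarily_large[OF primes_infinite] by blast
  obtain P where P: "P ` I \<subseteq> B" "inj_on P I"
    using card_le_inj[OF finI B(1)] B(2) by auto
  have Pp: "Factorial_Ring.prime (P S)" if "S \<in> I" for S using P B that by blast
  define n where "n = (\<Prod>S\<in>I. P S)"
  define Z where "Z v = {S \<in> I. v \<in> S}" for v
  define d where "d v = (\<Prod>S\<in>Z v. P S)" for v
  have finZ: "finite (Z v)" for v using finI by (simp add: Z_def)
  have key: "P S dvd d v \<longleftrightarrow> v \<in> S" if SI0: "S \<in> I" for S v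
  proof
    assume "P S dvd d v"
    then obtain S' where S': "S' \<in> Z v" "P S dvd P S'"
      using prime_dvd_prod_iff[OF finZ Pp[OF SI0]] unfolding d_def by blast
    then have "P S = P S'" using primes_dvd_imp_eq[OF Pp[OF SI0] Pp S'(2)] by (simp add: Z_def)
    then have "S = S'" using P(2) SI0 S' by (auto simp: Z_def inj_on_def)
    then show "v \<in> S" using S' by (simp add: Z_def)
  next
    assume "v \<in> S" then show "P S dvd d v" unfolding d_def
      using finZ SI0 by (intro dvd_prodI) (auto simp: Z_def)
  qed
  have emp: "{} \<in> I" by (simp add: I_def)
  have P2: "P S \<ge> 2" if "S \<in> I" for S using prime_ge_2_nat[OF Pp[OF that]] .
  have dpos: "d v > 0" for v unfolding d_def using finZ P2 by (intro prod_pos) (force simp: Z_def)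
  have npos: "n > 0" unfolding n_def using P2 by (intro prod_pos) force
  have dlt: "d v < n" for v
  proof -
    define Q where "Q = (\<Prod>S\<in>I - Z v. P S)"
    have sub: "Z v \<subseteq> I" by (auto simp: Z_def)
    have nQ: "n = Q * d v" unfolding n_def d_def Q_def
      by (rule prod.subset_diff[OF sub finI])
    moreover have "P {} dvd Q"
      unfolding Q_def using finI emp by (intro dvd_prodI) (auto simp: Z_def)
    moreover have "Q > 0" unfolding Q_def using P2 by (intro prod_pos) force
    ultimately have "Q \<ge> 2" using P2[OF emp] dvd_imp_le[of "P {}" Q] by linarith
    then have "2 * d v \<le> Q * d v" by simp
    then show ?thesis using nQ dpos[of v] by linarith
  qed
  have n1: "n > 1" using dlt[of undefined] dpos[of undefined] by linarith
  have dvdn: "P S dvd n" if "S \<in> I" for S unfolding n_def using finI that by (intro dvd_prodI)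
  have grp: "group (Zn n)" using npos by (rule Zn_group)
  have inj: "inj_on d V"
  proof (rule inj_onI)
    fix u v assume uv: "u \<in> V" "v \<in> V" "d u = d v"
    have "{v} \<in> I" using uv by (simp add: I_def)
    then have "P {v} dvd d u" using key[of "{v}" v] uv by simp
    then have "u \<in> {v}" using key[of "{v}" u] \<open>{v} \<in> I\<close> by simp
    then show "u = v" by simp
  qed
  have adj: "E u v \<longleftrightarrow> gen_graph_adj (Zn n) (d u) (d v)" if uv: "u \<in> V" "v \<in> V" for u v
  proof (cases "u = v")
    case True then show ?thesis using assms(3) by (simp add: gen_graph_adj_def)
  next
    case False
    then have ne: "d u \<noteq> d v" using inj uv by (meson inj_on_eq_iff)
    have car: "d u \<in> carrier (Zn n)" "d v \<in> carrier (Zn n)" using dlt by (auto simp: Zn_def)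
    show ?thesis
    proof (cases "E u v")
      case True
      have g1: "gcd (d u) (d v) = 1"
      proof (rule ccontr)
        assume "gcd (d u) (d v) \<noteq> 1"
        then obtain p where p: "Factorial_Ring.prime (p::nat)" "p dvd gcd (d u) (d v)"
          using prime_factor_nat by blast
        then have "p dvd d u" "p dvd d v" by auto
        then obtain S S' where S: "S \<in> Z u" "p dvd P S" and S': "S' \<in> Z v" "p dvd P S'"
          using prime_dvd_prod_iff[OF finZ p(1)] unfolding d_def by blast
        have "p = P S" "p = P S'" using primes_dvd_imp_eq[OF p(1) Pp S(2)] primes_dvd_imp_eq[OF p(1) Pp S'(2)] S(1) S'(1) by (auto simp: Z_def)
        then have "S = S'" using P(2) S S' by (auto simp: Z_def inj_on_def)
        then have "S \<in> I" "u \<in> S" "v \<in> S" using S S' by (auto simp: Z_def)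
        then show False using False True assms(2) unfolding I_def by auto
      qed
      have "generate (Zn n) {d u, d v} = carrier (Zn n)"
        by (rule Zn_gen[OF n1 dlt[of u] dlt[of v] dpos[of u] g1])
      then show ?thesis using True ne car by (simp add: gen_graph_adj_def)
    next
      case nE: False
      have SI: "{u, v} \<in> I" using uv False nE unfolding I_def by blast
      have "generate (Zn n) {d u, d v} \<noteq> carrier (Zn n)"
        using Zn_nongen[OF n1 dlt[of u] dlt[of v] Pp[OF SI] dvdn[OF SI]] key[OF SI] by simp
      then show ?thesis using nE by (simp add: gen_graph_adj_def)
    qed
  qed
  show ?thesis
    apply (rule exI[of _ "Zn n"], rule exI[of _ d])
    using grp inj adj dlt by (auto simp: Zn_def)
qed

end
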